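(* Let $p$ be an odd prime. Then $$\prod_{\substack{i,j=1\\ p\nmid i^2-j^2}}^{(p-1)/2}(i^2-j^2)\equiv-\left(\frac{2}{p}\right)\pmod p.$$
   Context: $\left(\frac{\cdot}{p}\right)$ denotes the Legendre symbol. *)

theory Defs
  imports "HOL-Number_Theory.Number_Theory"
begin

end

theory Submission
  imports Defs
begin

lemma modD: fixes k q :: int assumes "-q < k" "k < q" "k \<noteq> 0"
  shows "k mod q = (if k > 0 then k else k + q)"
proof (cases "k > 0")
  case True then show ?thesis using assms by simp
next
  case False
  have "k mod q = (k + q) mod q" by simp
  also have "\<dots> = k + q" using assms False by (intro mod_pos_pos_trivial) auto
  finally show ?thesis using False by simp
qed

lemma W: fixes p :: nat and c n :: int
  assumes pr: "prime p" and pn: "int p = 2*n+1" and c0: "0 \<le> c" and cn: "c \<le> n"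
  shows "[(\<Prod>k\<in>{c-n..c+n}-{0}. k) = -1] (mod int p)"
proof -
  let ?q = "int p"
  have r: "(\<Prod>k\<in>{c-n..c+n}-{0}. k mod ?q) = (\<Prod>m\<in>{1..p-1}. int m)"
  proof (rule prod.reindex_bij_witness[where i="\<lambda>m. if int m \<le> c+n then int m else int m - ?q"
        and j="\<lambda>k. nat (k mod ?q)"])
    fix a assume a: "a \<in> {c-n..c+n}-{0}"
    then have m: "a mod ?q = (if a > 0 then a else a + ?q)" using pn c0 cn by (intro modD) auto
    show "(if int (nat (a mod ?q)) \<le> c + n then int (nat (a mod ?q)) else int (nat (a mod ?q)) - ?q) = a"
      using a m pn c0 cn by auto
    show "nat (a mod ?q) \<in> {1..p-1}" using a m pn c0 cn by auto
    show "int (nat (a mod ?q)) = a mod ?q" using a m pn c0 cn by auto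
  next
    fix b assume b: "b \<in> {1..p-1}"
    then have b1: "1 \<le> int b" "int b \<le> ?q - 1" by auto
    show "(if int b \<le> c + n then int b else int b - ?q) \<in> {c-n..c+n}-{0}"
      using b1 pn c0 cn by auto
    show "nat ((if int b \<le> c + n then int b else int b - ?q) mod ?q) = b"
    proof (cases "int b \<le> c + n")
      case True then show ?thesis using b1 by (simp add: mod_pos_pos_trivial)
    next
      case False
      have "(int b - ?q) mod ?q = int b mod ?q" by simp
      also have "\<dots> = int b" using b1 by (simp add: mod_pos_pos_trivial)
      finally show ?thesis using False by simp
    qed
  qed
  have "[(\<Prod>k\<in>{c-n..c+n}-{0}. k) = (\<Prod>k\<in>{c-n..c+n}-{0}. k mod ?q)] (mod ?q)"
    by (rule cong_prod) (simp add: cong_def)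
  also have "(\<Prod>k\<in>{c-n..c+n}-{0}. k mod ?q) = fact (p - 1)"
    unfolding r fact_prod by simp
  also have "[fact (p - 1) = (-1::int)] (mod ?q)" using wilson_theorem[OF pr] .
  finally show ?thesis .
qed

lemma Qi: fixes p :: nat and i n :: int
  assumes pr: "prime p" and pn: "int p = 2*n+1" and i1: "1 \<le> i" and iN: "i \<le> n"
  shows "[(\<Prod>j\<in>{1..n}-{i}. i^2 - j^2) * (2*i^2) = -1] (mod int p)"
proof -
  let ?A = "{1..n}-{i}"
  have e1: "(\<Prod>j\<in>?A. i^2 - j^2) = (\<Prod>j\<in>?A. i - j) * (\<Prod>j\<in>?A. i + j)"
    by (simp add: prod.distrib[symmetric] power2_eq_square algebra_simps)
  have iin: "i \<in> {1..n}" using i1 iN by simp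
  have e2: "(\<Prod>j\<in>{1..n}. i + j) = (i + i) * (\<Prod>j\<in>?A. i + j)"
    using prod.remove[OF finite_atLeastAtMost_int iin, of "\<lambda>j. i+j"] iN i1 by simp
  have "{0..n}-{i} = insert 0 ?A" using i1 iN by auto
  then have e3: "(\<Prod>j\<in>{0..n}-{i}. i - j) = i * (\<Prod>j\<in>?A. i - j)" by simp
  have e4: "(\<Prod>k\<in>{i-n..i}-{0}. k) = (\<Prod>j\<in>{0..n}-{i}. i - j)"
    by (rule prod.reindex_bij_witness[where i="\<lambda>x. i - x" and j="\<lambda>x. i - x"]) auto
  have e5: "(\<Prod>k\<in>{i+1..i+n}. k) = (\<Prod>j\<in>{1..n}. i + j)"
    by (rule prod.reindex_bij_witness[where i="\<lambda>x. i + x" and j="\<lambda>x. x - i"]) auto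
  have U1: "{i-n..i+n}-{0} = ({i-n..i}-{0}) \<union> {i+1..i+n}" using i1 by auto
  have e6: "(\<Prod>k\<in>{i-n..i+n}-{0}. k) = (\<Prod>k\<in>{i-n..i}-{0}. k) * (\<Prod>k\<in>{i+1..i+n}. k)"
    unfolding U1 by (rule prod.union_disjoint) auto
  have "(\<Prod>k\<in>{i-n..i+n}-{0}. k) = (\<Prod>j\<in>?A. i^2 - j^2) * (2*i^2)"
    unfolding e6 e4 e5 e3 e2 e1 by (simp add: power2_eq_square algebra_simps)
  with W[OF pr pn, of i] i1 iN show ?thesis by simp
qed

lemma aux: "(x::int) * l * (-1) * l = - (x * (l * l))" by simp

theorem mainTheorem10:
  fixes p :: nat
  assumes "prime p" and "odd p"
  shows "[(\<Prod>(i, j) \<in> {(i, j). i \<in> {1..(int p - 1) div 2} \<and> j \<in> {1..(int p - 1) div 2}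
              \<and> \<not> int p dvd (i^2 - j^2)}. (i^2 - j^2)) = - Legendre 2 (int p)] (mod int p)"
proof -
  note pr = assms(1)
  define n where "n = (int p - 1) div 2"
  have p2: "p > 2" using assms prime_ge_2_nat[OF pr] by (metis dvd_refl le_neq_implies_less)
  have pn: "int p = 2*n+1" using assms(2) unfolding n_def by presburger
  have n1: "n \<ge> 1" using p2 pn by linarith
  have prq: "prime (int p)" using pr by simp
  have S: "{(i, j). i \<in> {1..n} \<and> j \<in> {1..n} \<and> \<not> int p dvd (i^2 - j^2)} = Sigma {1..n} (\<lambda>i. {1..n}-{i})"
  proof -
    have "int p dvd (i^2 - j^2) \<longleftrightarrow> i = j" if "i \<in> {1..n}" "j \<in> {1..n}" for i j
    proof
      assume d: "int p dvd (i^2 - j^2)"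
      have "i^2 - j^2 = (i - j) * (i + j)" by (simp add: power2_eq_square algebra_simps)
      with d prq have "int p dvd (i - j) \<or> int p dvd (i + j)" by (simp add: prime_dvd_mult_iff)
      moreover have "\<not> int p dvd (i + j)" using that pn zdvd_imp_le[of "int p" "i+j"] by auto
      ultimately have "int p dvd (i - j)" by simp
      then show "i = j" using that pn dvd_imp_le_int[of "i - j" "int p"] by (cases "i = j") auto
    qed simp
    then show ?thesis by auto
  qed
  let ?X = "\<Prod>(i, j) \<in> {(i, j). i \<in> {1..n} \<and> j \<in> {1..n} \<and> \<not> int p dvd (i^2 - j^2)}. (i^2 - j^2)"
  have X: "?X = (\<Prod>i\<in>{1..n}. \<Prod>j\<in>{1..n}-{i}. i^2 - j^2)"
    unfolding S by (subst prod.Sigma) auto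
  define F where "F = (\<Prod>i\<in>{1..n}. i)^2"
  define E :: int where "E = (-1)^nat n"
  define T :: int where "T = 2^nat n"
  have cardn: "card {1..n} = nat n" by simp
  have "[(\<Prod>i\<in>{1..n}. (\<Prod>j\<in>{1..n}-{i}. i^2 - j^2) * (2*i^2)) = (\<Prod>i\<in>{1..n}. -1)] (mod int p)"
    by (rule cong_prod) (use Qi[OF pr pn] in auto)
  moreover have "(\<Prod>i\<in>{1..n}. (\<Prod>j\<in>{1..n}-{i}. i^2 - j^2) * (2*i^2)) = ?X * T * F"
    unfolding X T_def F_def prod.distrib by (simp add: prod_power_distrib power_mult_distrib)
  moreover have "(\<Prod>i\<in>{1..n}. (-1::int)) = E" unfolding E_def by simp
  ultimately have A: "[?X * T * F = E] (mod int p)" by simp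
  have U2: "{-n..n}-{0} = {-n..-1} \<union> {1..n}" by auto
  have "(\<Prod>k\<in>{-n..n}-{0}. k) = (\<Prod>k\<in>{-n..-1}. k) * (\<Prod>k\<in>{1..n}. k)"
    unfolding U2 by (rule prod.union_disjoint) auto
  also have "(\<Prod>k\<in>{-n..-1}. k) = (\<Prod>k\<in>{1..n}. (-1) * k)"
    by (rule prod.reindex_bij_witness[where i="\<lambda>x. - x" and j="\<lambda>x. - x"]) auto
  also have "\<dots> = E * (\<Prod>k\<in>{1..n}. k)" unfolding prod.distrib E_def by simp
  finally have "(\<Prod>k\<in>{-n..n}-{0}. k) = E * F" unfolding F_def by (simp add: power2_eq_square)
  then have B: "[E * F = -1] (mod int p)"
    using W[OF pr pn, of 0] n1 by simp
  have Lc: "[Legendre 2 (int p) = T] (mod int p)"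
  proof -
    have "p - 1 = 2 * nat n" using pn n1 by linarith
    then have "(p - 1) div 2 = nat n" by simp
    then show ?thesis using euler_criterion[OF pr p2, of 2] unfolding T_def by simp
  qed
  define L where "L = Legendre 2 (int p)"
  have L2: "L * L = 1"
  proof -
    have "\<not> [2 = 0] (mod int p)" using p2 by (simp add: cong_def)
    then show ?thesis unfolding L_def Legendre_def by auto
  qed
  have E2: "E * E = 1" unfolding E_def by (simp flip: power_add)
  have "[?X * T * (-1) = ?X * T * (E * F)] (mod int p)" by (rule cong_mult[OF cong_refl cong_sym[OF B]])
  also have "?X * T * (E * F) = (?X * T * F) * E" by (simp add: ac_simps)
  also have "[(?X * T * F) * E = E * E] (mod int p)" by (rule cong_mult[OF A cong_refl])
  also have "E * E = 1" by (rule E2)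
  finally have C: "[?X * T * (-1) = 1] (mod int p)" .
  have "[?X * L * (-1) = ?X * T * (-1)] (mod int p)"
    using Lc unfolding L_def by (intro cong_mult cong_refl)
  also note C
  finally have "[?X * L * (-1) = 1] (mod int p)" .
  then have F1: "[?X * L * (-1) * L = 1 * L] (mod int p)" by (rule cong_mult) simp
  have eqn: "?X * L * (-1) * L = - ?X"
  proof -
    have "?X * L * (-1) * L = - (?X * (L * L))" by (rule aux)
    then show ?thesis using L2 by simp
  qed
  have "[- ?X = L] (mod int p)" using F1 eqn by (simp only: mult_1_left)
  then have "[- ?X = - (- L)] (mod int p)" by (simp only: minus_minus)
  then have "[?X = - L] (mod int p)" by (simp only: cong_minus_minus_iff)
  then show ?thesis unfolding L_def n_def .
qed

end
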